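(* Let $s\in(\frac12,1)$ and let $\Omega\subset\mathbb R^N$ be a bounded open set. Let $u,w:\mathbb R^N\to\mathbb R$ be continuous functions such that $\Delta^s_\infty u\ge0$ and $\Delta^s_\infty w\le0$ at every point of $\Omega$ in the viscosity sense; $u$ and $w$ grow less than $|x|^{2s}$ at infinity (i.e. there are $\alpha<2s$ and $C>0$ with $|u(x)|,|w(x)|\le C(1+|x|)^\alpha$); and $u\le w$ in $\mathbb R^N\setminus\Omega$. Then $u\le w$ in $\Omega$.
   Context: $S^{N-1}$ unit sphere. A function $\phi$ is $C^{1,1}$ at $x_0$ ($\phi\in C^{1,1}(x_0)$) if there are $p\in\mathbb R^N$, $M,\eta_0>0$ with $|\phi(x_0+x)-\phi(x_0)-p\cdot x|\le M|x|^2$ for $|x|<\eta_0$; $\nabla\phi(x_0):=p$. Infinity fractional Laplacian of such $\phi$: if $\nabla\phi(x)\ne0$, $v=\nabla\phi(x)/|\nabla\phi(x)|$, $\Delta^s_\infty\phi(x)=\int_0^\infty\frac{\phi(x+\eta v)+\phi(x-\eta v)-2\phi(x)}{\eta^{1+2s}}d\eta$; if $\nabla\phi(x)=0$, $\Delta^s_\infty\phi(x)=\sup_{y\in S^{N-1}}\int_0^\infty\frac{\phi(x+\eta y)-\phi(x)}{\eta^{1+2s}}d\eta+\inf_{z\in S^{N-1}}\int_0^\infty\frac{\phi(x-\eta z)-\phi(x)}{\eta^{1+2s}}d\eta$. Viscosity sense: an upper [lower] semicontinuous $u$ satisfies $\Delta^s_\infty u(x_0)\ge0$ [$\le0$] if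 whenever $r>0$, $\phi\in C^{1,1}(x_0)\cap C(\overline{B_r(x_0)})$, $\phi(x_0)=u(x_0)$ and $\phi>u$ [$\phi<u$] on $B_r(x_0)\setminus\{x_0\}$, the function $\tilde u$ equal to $\phi$ on $B_r(x_0)$ and to $u$ elsewhere satisfies $\Delta^s_\infty\tilde u(x_0)\ge0$ [$\le0$]. *)

theory Defs
  imports "HOL-Analysis.Analysis"
begin

definition C11_with :: "(real^'n \<Rightarrow> real) \<Rightarrow> real^'n \<Rightarrow> real^'n \<Rightarrow> bool" where
  "C11_with \<phi> x0 p \<longleftrightarrow> (\<exists>M \<eta>0. M > 0 \<and> \<eta>0 > 0 \<and>
      (\<forall>x. norm x < \<eta>0 \<longrightarrow> \<bar>\<phi> (x0 + x) - \<phi> x0 - p \<bullet> x\<bar> \<le> M * (norm x)\<^sup>2))"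

definition C11_at :: "(real^'n \<Rightarrow> real) \<Rightarrow> real^'n \<Rightarrow> bool" where
  "C11_at \<phi> x0 \<longleftrightarrow> (\<exists>p. C11_with \<phi> x0 p)"

definition grad_at :: "(real^'n \<Rightarrow> real) \<Rightarrow> real^'n \<Rightarrow> real^'n" where
  "grad_at \<phi> x0 = (THE p. C11_with \<phi> x0 p)"

text \<open>Infinity fractional Laplacian; integrals over (0,infinity) are (improper) Henstock-Kurzweil integrals.\<close>
definition inf_frac_lap :: "real \<Rightarrow> (real^'n \<Rightarrow> real) \<Rightarrow> real^'n \<Rightarrow> real" where
  "inf_frac_lap s \<phi> x =
    (if grad_at \<phi> x \<noteq> 0 then
       (let v = grad_at \<phi> x /\<^sub>R norm (grad_at \<phi> x) in
        integral {0<..} (\<lambda>\<eta>. (\<phi> (x + \<eta> *\<^sub>R v) + \<phi> (x - \<eta> *\<^sub>R v) - 2 * \<phi> x) / \<eta> powr (1 + 2 * s)))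
     else
       (SUP y\<in>sphere 0 1. integral {0<..} (\<lambda>\<eta>. (\<phi> (x + \<eta> *\<^sub>R y) - \<phi> x) / \<eta> powr (1 + 2 * s)))
       + (INF z\<in>sphere 0 1. integral {0<..} (\<lambda>\<eta>. (\<phi> (x - \<eta> *\<^sub>R z) - \<phi> x) / \<eta> powr (1 + 2 * s))))"

definition visc_ge0 :: "real \<Rightarrow> (real^'n \<Rightarrow> real) \<Rightarrow> real^'n \<Rightarrow> bool" where
  "visc_ge0 s u x0 \<longleftrightarrow> (\<forall>r>0. \<forall>\<phi>. C11_at \<phi> x0 \<and> continuous_on (cball x0 r) \<phi> \<and> \<phi> x0 = u x0 \<and>
      (\<forall>x\<in>ball x0 r - {x0}. \<phi> x > u x) \<longrightarrow>
      inf_frac_lap s (\<lambda>x. if x \<in> ball x0 r then \<phi> x else u x) x0 \<ge> 0)"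

definition visc_le0 :: "real \<Rightarrow> (real^'n \<Rightarrow> real) \<Rightarrow> real^'n \<Rightarrow> bool" where
  "visc_le0 s u x0 \<longleftrightarrow> (\<forall>r>0. \<forall>\<phi>. C11_at \<phi> x0 \<and> continuous_on (cball x0 r) \<phi> \<and> \<phi> x0 = u x0 \<and>
      (\<forall>x\<in>ball x0 r - {x0}. \<phi> x < u x) \<longrightarrow>
      inf_frac_lap s (\<lambda>x. if x \<in> ball x0 r then \<phi> x else u x) x0 \<le> 0)"

end

theory Submission
  imports Defs
begin

lemma norm_add_sq: fixes a h :: "'a::real_inner"
  shows "norm (a+h)^2 = norm a^2 + 2*(a \<bullet> h) + norm h^2"
  by (simp add: power2_norm_eq_inner inner_add algebra_simps inner_commute)

lemma Fq_C11: fixes a h :: "'a::real_inner" assumes e: "\<epsilon>>0" and h1: "norm h \<le> 1"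
  shows "\<bar>((norm(a+h)^4 - norm a^4)/\<epsilon> + norm h^4) - ((4*norm a^2/\<epsilon>) *\<^sub>R a) \<bullet> h\<bar>
     \<le> ((2*norm a^2 + (2*norm a+1)^2)/\<epsilon> + 1) * norm h^2"
proof -
  define A where "A = norm a^2"
  define P where "P = a \<bullet> h"
  define H where "H = norm h"
  have n4: "norm (a+h)^4 = (A + 2*P + H^2)^2"
    using norm_add_sq[of a h] unfolding A_def P_def H_def
    by (metis (no_types, lifting) numeral_Bit0 power_add power2_eq_square)
  have a4: "norm a^4 = A^2" unfolding A_def by (simp add: power_mult[symmetric])
  have eq: "((norm(a+h)^4 - norm a^4)/\<epsilon> + norm h^4) - ((4*norm a^2/\<epsilon>) *\<^sub>R a) \<bullet> h
      = (2*A*H^2 + (2*P+H^2)^2)/\<epsilon> + H^4"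
    unfolding n4 a4 using e by (simp add: A_def P_def H_def field_simps power2_eq_square)
  have P: "\<bar>P\<bar> \<le> norm a * H" unfolding P_def H_def by (rule Cauchy_Schwarz_ineq2)
  have H0: "0 \<le> H" "H \<le> 1" using h1 by (auto simp: H_def)
  have "\<bar>2*P+H^2\<bar> \<le> (2*norm a+1)*H"
  proof -
    have "\<bar>2*P+H^2\<bar> \<le> 2*\<bar>P\<bar> + H^2" by (simp add: abs_triangle_ineq[THEN order_trans])
    also have "H^2 \<le> H" using H0 by (simp add: power2_eq_square mult_left_le)
    ultimately show ?thesis using P by (auto simp: algebra_simps)
  qed
  hence sq: "(2*P+H^2)^2 \<le> (2*norm a+1)^2*H^2"
    by (metis abs_ge_zero power2_abs power_mono power_mult_distrib)
  have H4: "H^4 \<le> H^2" using H0 by (simp add: power_decreasing)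
  have nn: "0 \<le> (2*A*H^2 + (2*P+H^2)^2)/\<epsilon> + H^4" using e by (simp add: A_def)
  have "(2*A*H^2 + (2*P+H^2)^2)/\<epsilon> \<le> ((2*A + (2*norm a+1)^2)/\<epsilon>) * H^2"
    using sq e by (simp add: divide_right_mono field_simps)
  thus ?thesis unfolding eq using nn H4 by (simp add: A_def H_def algebra_simps)
qed

lemma Fq_sym: fixes a h :: "'a::real_inner" assumes e: "\<epsilon>>0" and h1: "norm h \<le> 1"
  shows "0 \<le> ((norm(a+h)^4 - norm a^4)/\<epsilon> + norm h^4) + ((norm(a+ -h)^4 - norm a^4)/\<epsilon> + norm (-h)^4)"
    and "((norm(a+h)^4 - norm a^4)/\<epsilon> + norm h^4) + ((norm(a+ -h)^4 - norm a^4)/\<epsilon> + norm (-h)^4)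
     \<le> ((12*norm a^2 + 2)/\<epsilon> + 2) * norm h^2"
proof -
  define A where "A = norm a^2"
  define P where "P = a \<bullet> h"
  define H where "H = norm h"
  have n4: "norm (a+h)^4 = (A + 2*P + H^2)^2"
    using norm_add_sq[of a h] unfolding A_def P_def H_def
    by (metis (no_types, lifting) numeral_Bit0 power_add power2_eq_square)
  have n4': "norm (a+ -h)^4 = (A - 2*P + H^2)^2"
    using norm_add_sq[of a "-h"] unfolding A_def P_def H_def
    by (metis (no_types, lifting) inner_minus_right norm_minus_cancel numeral_Bit0 power_add power2_eq_square diff_conv_add_uminus mult_minus_right)
  have a4: "norm a^4 = A^2" unfolding A_def by (simp add: power_mult[symmetric])
  have eq: "((norm(a+h)^4 - norm a^4)/\<epsilon> + norm h^4) + ((norm(a+ -h)^4 - norm a^4)/\<epsilon> + norm (-h)^4)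
      = (4*A*H^2 + 2*H^4 + 8*P^2)/\<epsilon> + 2*H^4"
    unfolding n4 n4' a4 using e by (simp add: H_def field_simps power2_eq_square eval_nat_numeral)
  have P: "P^2 \<le> A * H^2" unfolding P_def H_def A_def
    by (metis Cauchy_Schwarz_ineq2 power2_abs power_mono abs_ge_zero power_mult_distrib)
  have H0: "0 \<le> H" "H \<le> 1" using h1 by (auto simp: H_def)
  have H4: "H^4 \<le> H^2" using H0 by (simp add: power_decreasing)
  have A0: "0 \<le> A" by (simp add: A_def)
  show "0 \<le> ((norm(a+h)^4 - norm a^4)/\<epsilon> + norm h^4) + ((norm(a+ -h)^4 - norm a^4)/\<epsilon> + norm (-h)^4)"
    unfolding eq using e A0 H0 by simp
  have "4*A*H^2 + 2*H^4 + 8*P^2 \<le> (12*A + 2) * H^2" using P H4 A0 by (simp add: algebra_simps)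
  hence "(4*A*H^2 + 2*H^4 + 8*P^2)/\<epsilon> \<le> ((12*A + 2) * H^2)/\<epsilon>" using e by (intro divide_right_mono) auto
  hence "(4*A*H^2 + 2*H^4 + 8*P^2)/\<epsilon> \<le> ((12*A + 2)/\<epsilon>) * H^2" by simp
  thus "((norm(a+h)^4 - norm a^4)/\<epsilon> + norm h^4) + ((norm(a+ -h)^4 - norm a^4)/\<epsilon> + norm (-h)^4)
     \<le> ((12*norm a^2 + 2)/\<epsilon> + 2) * norm h^2"
    unfolding eq using H4 by (simp add: A_def H_def algebra_simps)
qed
definition Fq :: "real \<Rightarrow> 'a::real_inner \<Rightarrow> 'a \<Rightarrow> real" where
  "Fq \<epsilon> a h = (norm(a+h)^4 - norm a^4)/\<epsilon> + norm h^4"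

lemma Fq0[simp]: "Fq \<epsilon> a 0 = 0" by (simp add: Fq_def)

lemma Fq_C11': "\<epsilon>>0 \<Longrightarrow> norm h \<le> 1 \<Longrightarrow> \<bar>Fq \<epsilon> a h - ((4*norm a^2/\<epsilon>) *\<^sub>R a) \<bullet> h\<bar>
     \<le> ((2*norm a^2 + (2*norm a+1)^2)/\<epsilon> + 1) * norm h^2"
  unfolding Fq_def by (rule Fq_C11)

lemma Fq_sym': assumes "\<epsilon>>0" "norm h \<le> 1"
  shows "0 \<le> Fq \<epsilon> a h + Fq \<epsilon> a (-h)" "Fq \<epsilon> a h + Fq \<epsilon> a (-h) \<le> ((12*norm a^2 + 2)/\<epsilon> + 2) * norm h^2"
  using Fq_sym[OF assms, of a] unfolding Fq_def by auto

lemma C11_unique: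
  assumes "C11_with f x p" "C11_with f x q" shows "p = q"
proof (rule ccontr)
  assume ne: "p \<noteq> q"
  obtain M1 e1 where M1: "M1>0" "e1>0" "\<And>h. norm h < e1 \<Longrightarrow> \<bar>f (x + h) - f x - p \<bullet> h\<bar> \<le> M1 * (norm h)\<^sup>2"
    using assms(1) unfolding C11_with_def by blast
  obtain M2 e2 where M2: "M2>0" "e2>0" "\<And>h. norm h < e2 \<Longrightarrow> \<bar>f (x + h) - f x - q \<bullet> h\<bar> \<le> M2 * (norm h)\<^sup>2"
    using assms(2) unfolding C11_with_def by blast
  define d where "d = p - q"
  have dn: "norm d > 0" using ne by (simp add: d_def)
  define t where "t = min (min e1 e2 / (2 * norm d)) (1 / (2*(M1+M2)))"
  have t0: "t > 0" using M1 M2 dn by (simp add: t_def)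
  have ht: "norm (t *\<^sub>R d) < e1" "norm (t *\<^sub>R d) < e2"
  proof -
    have "norm (t *\<^sub>R d) = t * norm d" using t0 by simp
    also have "\<dots> \<le> min e1 e2 / (2 * norm d) * norm d" using dn by (intro mult_right_mono) (auto simp: t_def)
    also have "\<dots> = min e1 e2 / 2" using dn by simp
    finally show "norm (t *\<^sub>R d) < e1" "norm (t *\<^sub>R d) < e2" using M1 M2 by auto
  qed
  have "\<bar>d \<bullet> (t *\<^sub>R d)\<bar> \<le> (M1+M2) * (norm (t *\<^sub>R d))\<^sup>2"
    using M1(3)[OF ht(1)] M2(3)[OF ht(2)] unfolding d_def by (simp add: inner_diff_left algebra_simps abs_if split: if_splits)
  hence "t * norm d ^2 \<le> (M1+M2) * (t^2 * norm d^2)" using t0 by (simp add: power2_norm_eq_inner power_mult_distrib abs_mult)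
  hence "t * norm d^2 * 1 \<le> t * norm d ^2 * ((M1+M2) * t)" by (simp add: power2_eq_square algebra_simps)
  hence "1 \<le> (M1+M2) * t" using t0 dn by (simp add: mult_le_cancel_left_pos)
  moreover have "(M1+M2)*t \<le> (M1+M2) * (1 / (2*(M1+M2)))" using M1 M2 by (intro mult_left_mono) (auto simp: t_def)
  moreover have "(M1+M2) * (1 / (2*(M1+M2))) = 1/2" using M1 M2 by simp
  ultimately show False by linarith
qed

lemma grad_at_eq: "C11_with f x p \<Longrightarrow> grad_at f x = p"
  unfolding grad_at_def using C11_unique by blast

lemma C11_tilde: assumes "C11_with \<phi> x p" "r > 0"
  shows "C11_with (\<lambda>z. if z \<in> ball x r then \<phi> z else u z) x p"
proof -
  obtain M e where M: "M>0" "e>0" "\<And>h. norm h < e \<Longrightarrow> \<bar>\<phi> (x + h) - \<phi> x - p \<bullet> h\<bar> \<le> M * (norm h)\<^sup>2"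
    using assms(1) unfolding C11_with_def by blast
  show ?thesis unfolding C11_with_def
    by (rule exI[of _ M], rule exI[of _ "min e r"]) (use M assms(2) in \<open>auto simp: dist_norm\<close>)
qed

lemma C11_phi: fixes x a :: "real^'n" assumes "\<epsilon> > 0"
  shows "C11_with (\<lambda>z. c + Fq \<epsilon> a (z - x)) x ((4*norm a^2/\<epsilon>) *\<^sub>R a)"
  unfolding C11_with_def
proof (rule exI[of _ "(2*norm a^2 + (2*norm a+1)^2)/\<epsilon> + 1"], rule exI[of _ 1], intro conjI allI impI)
  show "0 < (2*norm a^2 + (2*norm a+1)^2)/\<epsilon> + 1" using assms by (auto intro: add_nonneg_pos)
  fix h :: "real^'n" assume h: "norm h < 1"
  show "\<bar>(c + Fq \<epsilon> a (x + h - x)) - (c + Fq \<epsilon> a (x - x)) - ((4*norm a^2/\<epsilon>) *\<^sub>R a) \<bullet> h\<bar> \<le> ((2*norm a^2 + (2*norm a+1)^2)/\<epsilon> + 1) * (norm h)\<^sup>2"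
    using Fq_C11'[OF assms, of h a] h by simp
qed simp

lemma C11_psi: fixes y a :: "real^'n" assumes "\<epsilon> > 0"
  shows "C11_with (\<lambda>z. c - Fq \<epsilon> a (y - z)) y ((4*norm a^2/\<epsilon>) *\<^sub>R a)"
  unfolding C11_with_def
proof (rule exI[of _ "(2*norm a^2 + (2*norm a+1)^2)/\<epsilon> + 1"], rule exI[of _ 1], intro conjI allI impI)
  show "0 < (2*norm a^2 + (2*norm a+1)^2)/\<epsilon> + 1" using assms by (auto intro: add_nonneg_pos)
  fix h :: "real^'n" assume h: "norm h < 1"
  have "\<bar>Fq \<epsilon> a (-h) - ((4*norm a^2/\<epsilon>) *\<^sub>R a) \<bullet> (-h)\<bar> \<le> ((2*norm a^2 + (2*norm a+1)^2)/\<epsilon> + 1) * norm (-h)^2"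
    using Fq_C11'[OF assms, of "-h"] h by simp
  thus "\<bar>(c - Fq \<epsilon> a (y - (y + h))) - (c - Fq \<epsilon> a (y - y)) - ((4*norm a^2/\<epsilon>) *\<^sub>R a) \<bullet> h\<bar> \<le> ((2*norm a^2 + (2*norm a+1)^2)/\<epsilon> + 1) * (norm h)\<^sup>2"
    by (simp add: abs_minus_commute inner_minus_right)
qed (simp)

lemma int_restrict:
  fixes f :: "real \<Rightarrow> real"
  shows "(f has_integral i) I \<Longrightarrow> I \<subseteq> {0<..} \<Longrightarrow> ((\<lambda>t. if t\<in>I then f t else 0) has_integral i) {0<..}"
  by (simp add: has_integral_restrict)

lemma int_pow0:
  fixes q r K :: real
  assumes "q > -1" "r > 0"
  shows "((\<lambda>t. K * t powr q) has_integral (K * (r powr (q+1)/(q+1)))) {0<..<r}"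
proof -
  have "((\<lambda>t. K * t powr q) has_integral (K * (r powr (q+1)/(q+1)))) {0..r}"
    using has_integral_powr_from_0[of q r] assms by (intro has_integral_mult_right) auto
  thus ?thesis using has_integral_open_interval[of "\<lambda>t. K * t powr q" _ 0 r] by simp
qed

lemma int_powinf:
  fixes q T K :: real
  assumes "q < -1" "T > 0"
  shows "((\<lambda>t. K * t powr q) has_integral (K * (-(T powr (q+1))/(q+1)))) {T..}"
  using has_integral_powr_to_inf[OF assms] by (intro has_integral_mult_right)

lemma dom_int:
  fixes N :: "real \<Rightarrow> real"
  assumes s: "1/2 < s" "s < 1" and a0: "0 \<le> a" "a < 2 * s" and r: "0<r"
    and K: "0 \<le> K" and L: "0 \<le> L"
    and meas: "N \<in> borel_measurable borel"
    and b1: "\<And>t. 0<t \<Longrightarrow> t<r \<Longrightarrow> \<bar>N t\<bar> \<le> K * t^2"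
    and b2: "\<And>t. r \<le> t \<Longrightarrow> \<bar>N t\<bar> \<le> L * t powr a"
  shows "(\<lambda>t. N t / t powr (1 + 2 * s)) integrable_on {0<..}"
    and "\<bar>integral {0<..} (\<lambda>t. N t / t powr (1 + 2 * s))\<bar>
          \<le> K * (r powr (2 - 2 * s)/(2 - 2 * s)) + L * (-(r powr (a - 2 * s))/(a - 2 * s))"
proof -
  define g where "g t = (if t \<in> {0<..<r} then K * t powr (1 - 2 * s) else 0) + (if t \<in> {r..} then L * t powr (a - 1 - 2 * s) else 0)" for t
  have gi: "(g has_integral (K * (r powr (2 - 2 * s)/(2 - 2 * s)) + L * (-(r powr (a - 2 * s))/(a - 2 * s)))) {0<..}"
  proof -
    have 1: "((\<lambda>t. K * t powr (1 - 2 * s)) has_integral (K * (r powr (2 - 2 * s)/(2 - 2 * s)))) {0<..<r}"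
      using int_pow0[of "1 - 2 * s" r K] s r by (simp add: algebra_simps)
    have 2: "((\<lambda>t. L * t powr (a - 1 - 2 * s)) has_integral (L * (-(r powr (a - 2 * s))/(a - 2 * s)))) {r..}"
      using int_powinf[of "a - 1 - 2 * s" r L] s r a0 by (simp add: algebra_simps)
    show ?thesis unfolding g_def
      by (intro has_integral_add int_restrict[OF 1] int_restrict[OF 2]) (use r in auto)
  qed
  have bound: "\<bar>N t / t powr (1 + 2 * s)\<bar> \<le> g t" if t: "t \<in> {0<..}" for t
  proof (cases "t < r")
    case True
    have "\<bar>N t / t powr (1 + 2 * s)\<bar> = \<bar>N t\<bar> / t powr (1 + 2 * s)" using t by (simp add: abs_divide)
    also have "\<dots> \<le> K * t^2 / t powr (1 + 2 * s)" using b1[of t] t True by (intro divide_right_mono) auto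
    also have "\<dots> = K * t powr (1 - 2 * s)"
    proof -
      have "K * t^2 / t powr (1 + 2 * s) = K * (t powr 2 / t powr (1 + 2 * s))" using t by (simp add: powr_numeral)
      also have "\<dots> = K * t powr (2 - (1 + 2 * s))" by (metis powr_diff)
      finally show ?thesis by (simp add: algebra_simps)
    qed
    finally show ?thesis using True t by (simp add: g_def)
  next
    case False
    have "\<bar>N t / t powr (1 + 2 * s)\<bar> = \<bar>N t\<bar> / t powr (1 + 2 * s)" using t by (simp add: abs_divide)
    also have "\<dots> \<le> L * t powr a / t powr (1 + 2 * s)" using b2[of t] t False by (intro divide_right_mono) auto
    also have "\<dots> = L * t powr (a - (1 + 2 * s))" by (metis powr_diff times_divide_eq_right)
    also have "\<dots> = L * t powr (a - 1 - 2 * s)" by (simp add: algebra_simps)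
    finally show ?thesis using False t by (simp add: g_def)
  qed
  have m: "(\<lambda>t. N t / t powr (1 + 2 * s)) \<in> borel_measurable (lebesgue_on {0<..})"
    apply (rule measurable_restrict_space1, rule measurable_completion)
    using meas by simp
  show int: "(\<lambda>t. N t / t powr (1 + 2 * s)) integrable_on {0<..}"
    by (rule measurable_bounded_by_integrable_imp_integrable_real[OF m _ bound]) (use gi in auto)
  have "norm (integral {0<..} (\<lambda>t. N t / t powr (1 + 2 * s))) \<le> integral {0<..} g"
    by (rule integral_norm_bound_integral[OF int]) (use gi bound in auto)
  thus "\<bar>integral {0<..} (\<lambda>t. N t / t powr (1 + 2 * s))\<bar>
          \<le> K * (r powr (2 - 2 * s)/(2 - 2 * s)) + L * (-(r powr (a - 2 * s))/(a - 2 * s))"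
    using gi by (simp add: integral_unique)
qed

lemma B_int:
  fixes r d T K c L q1 q3 :: real
  assumes "0<r" "r < d" "0 < d" "2*d < T" "q1 > -1" "q3 < -1"
  shows "((\<lambda>t. (if t\<in>{0<..<r} then K * t powr q1 else 0) + (if t\<in>{d..2*d} then -c else 0)
            + (if t\<in>{T..} then L * t powr q3 else 0))
     has_integral (K * (r powr (q1+1)/(q1+1)) + (-c)*d + L * (-(T powr (q3+1))/(q3+1)))) {0<..}"
proof -
  have 1: "((\<lambda>t. K * t powr q1) has_integral (K * (r powr (q1+1)/(q1+1)))) {0<..<r}"
    using int_pow0 assms by auto
  have 2: "((\<lambda>t. -c) has_integral (-c)*d) {d..2*d}"
    using has_integral_const_real[of "-c" d "2*d"] assms by (simp add: mult.commute)
  have 3: "((\<lambda>t. L * t powr q3) has_integral (L * (-(T powr (q3+1))/(q3+1)))) {T..}"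
    using int_powinf assms by auto
  show ?thesis
    by (intro has_integral_add int_restrict[OF 1] int_restrict[OF 2] int_restrict[OF 3]) (use assms in auto)
qed

lemma sup_inf_compare:
  fixes f g f' g' :: "'a \<Rightarrow> real"
  assumes S: "S \<noteq> {}"
    and b: "\<And>e. e\<in>S \<Longrightarrow> \<bar>f e\<bar> \<le> D \<and> \<bar>g e\<bar> \<le> D \<and> \<bar>f' e\<bar> \<le> D \<and> \<bar>g' e\<bar> \<le> D"
    and c: "\<And>e. e\<in>S \<Longrightarrow> f e \<le> g e + c \<and> f' e \<le> g' e + c"
  shows "(SUP e\<in>S. f e) + (INF e\<in>S. f' e) \<le> (SUP e\<in>S. g e) + (INF e\<in>S. g' e) + 2*c"
proof -
  have bg: "bdd_above (g ` S)" using b by (intro bdd_aboveI[of _ D]) (auto simp: abs_le_iff)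
  have bf': "bdd_below (f' ` S)" using b by (intro bdd_belowI[of _ "-D"]) (force simp: abs_le_iff)
  have 1: "(SUP e\<in>S. f e) \<le> (SUP e\<in>S. g e) + c"
  proof (rule cSUP_least[OF S])
    fix e assume e: "e \<in> S"
    have "g e \<le> (SUP e\<in>S. g e)" by (rule cSUP_upper[OF e bg])
    thus "f e \<le> (SUP e\<in>S. g e) + c" using c[OF e] by linarith
  qed
  have "(INF e\<in>S. f' e) - c \<le> (INF e\<in>S. g' e)"
  proof (rule cINF_greatest[OF S])
    fix e assume e: "e \<in> S"
    have "(INF e\<in>S. f' e) \<le> f' e" by (rule cINF_lower[OF bf' e])
    thus "(INF e\<in>S. f' e) - c \<le> g' e" using c[OF e] by linarith
  qed
  with 1 show ?thesis by linarith
qed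

lemma growth_bd:
  fixes C a0 R1 T t nq :: real
  assumes "0 \<le> a0" "0 < T" "T \<le> t" "0 \<le> R1" "0 \<le> nq" "nq \<le> R1 + t" "0 \<le> C"
  shows "C * (1 + nq) powr a0 \<le> C * ((1+R1)/T + 1) powr a0 * t powr a0"
proof -
  have "1 + nq \<le> ((1+R1)/T + 1) * t"
  proof -
    have "(1+R1) * 1 \<le> (1+R1) * (t/T)" using assms by (intro mult_left_mono) auto
    hence "(1+R1) \<le> (1+R1)/T * t" by simp
    thus ?thesis using assms by (simp add: algebra_simps)
  qed
  hence "(1 + nq) powr a0 \<le> (((1+R1)/T + 1) * t) powr a0" using assms by (intro powr_mono2) auto
  also have "\<dots> = ((1+R1)/T + 1) powr a0 * t powr a0" using assms by (simp add: powr_mult)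
  finally have "(1 + nq) powr a0 \<le> ((1+R1)/T + 1) powr a0 * t powr a0" .
  thus ?thesis using assms(7) by (metis mult_left_mono mult.assoc)
qed

theorem theorem3p2:
  fixes s :: real and \<Omega> :: "(real^'n) set" and u w :: "real^'n \<Rightarrow> real"
  assumes "1/2 < s" and "s < 1"
    and "open \<Omega>" and "bounded \<Omega>"
    and "continuous_on UNIV u" and "continuous_on UNIV w"
    and "\<forall>x\<in>\<Omega>. visc_ge0 s u x" and "\<forall>x\<in>\<Omega>. visc_le0 s w x"
    and "\<exists>\<alpha> C. \<alpha> < 2 * s \<and> C > 0 \<and>
           (\<forall>x. \<bar>u x\<bar> \<le> C * (1 + norm x) powr \<alpha> \<and> \<bar>w x\<bar> \<le> C * (1 + norm x) powr \<alpha>)"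
    and "\<forall>x. x \<notin> \<Omega> \<longrightarrow> u x \<le> w x"
  shows "\<forall>x\<in>\<Omega>. u x \<le> w x"
proof (rule ccontr)
  assume "\<not> (\<forall>x\<in>\<Omega>. u x \<le> w x)"
  then obtain x0 where x0: "x0 \<in> \<Omega>" "w x0 < u x0" by auto
  define M where "M = u x0 - w x0"
  have M0: "M > 0" using x0 by (simp add: M_def)
  obtain \<alpha> C where al: "\<alpha> < 2 * s" and C0: "C > 0"
     and gr: "\<And>x. \<bar>u x\<bar> \<le> C * (1 + norm x) powr \<alpha> \<and> \<bar>w x\<bar> \<le> C * (1 + norm x) powr \<alpha>"
    using assms(9) by blast
  define a0 where "a0 = max \<alpha> 0"
  have a0: "0 \<le> a0" "a0 < 2 * s" using al assms(1) by (auto simp: a0_def)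
  have gu: "\<bar>u q\<bar> \<le> C * (1 + norm q) powr a0" and gw: "\<bar>w q\<bar> \<le> C * (1 + norm q) powr a0" for q
  proof -
    have "(1 + norm q) powr \<alpha> \<le> (1 + norm q) powr a0" by (intro powr_mono) (auto simp: a0_def)
    hence "C * (1 + norm q) powr \<alpha> \<le> C * (1 + norm q) powr a0" using C0 by simp
    thus "\<bar>u q\<bar> \<le> C * (1 + norm q) powr a0" "\<bar>w q\<bar> \<le> C * (1 + norm q) powr a0"
      using gr[of q] by linarith+
  qed
  obtain R1 where R1: "R1 > 0" "\<Omega> \<subseteq> ball 0 R1" using bounded_subset_ballD[OF assms(4)] by blast
  have inO: "norm q < R1" if "q \<in> \<Omega>" for q using R1 that by auto
  define d where "d = 2 * R1 + 1"
  have d1: "d \<ge> 1" using R1 by (simp add: d_def)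
  define k where "k = 1 + 2 * s"
  define c1 where "c1 = (M/2) / (2*d) powr k"
  have c1: "c1 > 0" using M0 d1 by (simp add: c1_def)
  define \<beta> where "\<beta> = a0 - 2 * s"
  have \<beta>: "\<beta> < 0" using a0 by (simp add: \<beta>_def)
  define targ where "targ = c1 * d * (2 * s - a0) / (8 * C * 2 powr a0)"
  have targ: "targ > 0" using c1 d1 a0 C0 by (simp add: targ_def)
  have "eventually (\<lambda>T. T powr \<beta> < targ) at_top"
    using tendsto_neg_powr[OF \<beta> filterlim_ident] targ by (rule order_tendstoD)
  moreover have "eventually (\<lambda>T. T \<ge> 2*d + 1 + R1) at_top" by (rule eventually_ge_at_top)
  ultimately have "eventually (\<lambda>T. T powr \<beta> < targ \<and> T \<ge> 2*d + 1 + R1) at_top" by (rule eventually_conj)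
  then obtain T where T: "T powr \<beta> < targ" "T \<ge> 2*d + 1 + R1"
    unfolding eventually_at_top_linorder by blast
  have T0: "T > 0" using T(2) d1 R1 by linarith
  define c3 where "c3 = 2 * C * ((1+R1)/T + 1) powr a0"
  define I3 where "I3 = c3 * (-(T powr ((a0 - 1 - 2 * s) + 1))/((a0 - 1 - 2 * s) + 1))"
  have I3: "I3 < c1 * d / 4"
  proof -
    have "(1+R1)/T \<le> 1" using T T0 d1 by simp
    hence "((1+R1)/T + 1) powr a0 \<le> 2 powr a0" using a0 R1 T0 by (intro powr_mono2) auto
    hence c3le: "c3 \<le> 2 * C * 2 powr a0" using C0 by (simp add: c3_def)
    have e0: "(a0 - 1 - 2 * s) + 1 = -(2 * s - a0)" by simp
    have e: "I3 = c3 * (T powr \<beta> / (2 * s - a0))" unfolding I3_def e0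
      by (simp add: \<beta>_def) (metis minus_diff_eq minus_divide_right)
    have pos: "0 < T powr \<beta> / (2 * s - a0)" using a0 T0 by simp
    have "I3 \<le> 2 * C * 2 powr a0 * (T powr \<beta> / (2 * s - a0))" unfolding e using c3le pos by (intro mult_right_mono) auto
    also have "\<dots> < 2 * C * 2 powr a0 * (targ / (2 * s - a0))"
      using T(1) a0 C0 by (intro mult_strict_left_mono divide_strict_right_mono) auto
    also have "\<dots> = c1 * d / 4" using C0 a0 by (simp add: targ_def field_simps)
    finally show ?thesis .
  qed
  define R where "R = T + R1 + 1"
  define KK where "KK = cball (0::real^'n) R"
  have OK: "\<Omega> \<subseteq> KK" using R1 T0 by (auto simp: KK_def R_def)
  define BK where "BK = C * (1 + R) powr a0"
  have BK0: "BK > 0" using C0 R1 T0 by (simp add: BK_def R_def)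
  have uK: "\<bar>u q\<bar> \<le> BK" and wK: "\<bar>w q\<bar> \<le> BK" if "q \<in> KK" for q
  proof -
    have "(1 + norm q) powr a0 \<le> (1 + R) powr a0" using that a0 by (intro powr_mono2) (auto simp: KK_def)
    hence "C * (1 + norm q) powr a0 \<le> BK" using C0 by (simp add: BK_def)
    thus "\<bar>u q\<bar> \<le> BK" "\<bar>w q\<bar> \<le> BK" using gu[of q] gw[of q] by linarith+
  qed
  have cK: "compact KK" by (simp add: KK_def)
  have "uniformly_continuous_on KK w"
    by (rule compact_uniformly_continuous[OF continuous_on_subset[OF assms(6)] cK]) simp
  then obtain \<delta>w where \<delta>w: "\<delta>w > 0" "\<And>p q. p\<in>KK \<Longrightarrow> q\<in>KK \<Longrightarrow> dist q p < \<delta>w \<Longrightarrow> dist (w q) (w p) < M/2"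
    unfolding uniformly_continuous_on_def using M0 by (metis half_gt_zero)
  have "uniformly_continuous_on KK u"
    by (rule compact_uniformly_continuous[OF continuous_on_subset[OF assms(5)] cK]) simp
  then obtain \<delta>u where \<delta>u: "\<delta>u > 0" "\<And>p q. p\<in>KK \<Longrightarrow> q\<in>KK \<Longrightarrow> dist q p < \<delta>u \<Longrightarrow> dist (u q) (u p) < M/2"
    unfolding uniformly_continuous_on_def using M0 by (metis half_gt_zero)
  define \<delta> where "\<delta> = min \<delta>u \<delta>w"
  have \<delta>0: "\<delta> > 0" using \<delta>u \<delta>w by (simp add: \<delta>_def)
  define \<epsilon> where "\<epsilon> = \<delta>^4 / (2*BK+1)"
  have \<epsilon>0: "\<epsilon> > 0" using \<delta>0 BK0 by (simp add: \<epsilon>_def)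
  define \<Phi> where "\<Phi> = (\<lambda>z::(real^'n)\<times>(real^'n). u (fst z) - w (snd z) - norm (fst z - snd z)^4/\<epsilon>)"
  have "continuous_on (KK \<times> KK) \<Phi>" unfolding \<Phi>_def
    by (intro continuous_intros continuous_on_compose2[OF assms(5)] continuous_on_compose2[OF assms(6)]) (use \<epsilon>0 in auto)
  moreover have "KK \<times> KK \<noteq> {}" using OK x0 by auto
  ultimately obtain z where z: "z \<in> KK \<times> KK" "\<And>z'. z' \<in> KK \<times> KK \<Longrightarrow> \<Phi> z' \<le> \<Phi> z"
    using continuous_attains_sup[OF compact_Times[OF cK cK]] by blast
  define x where "x = fst z"
  define y where "y = snd z"
  have xK: "x \<in> KK" and yK: "y \<in> KK" using z by (auto simp: x_def y_def mem_Times_iff)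
  have hmax: "u p - w q - norm (p - q)^4/\<epsilon> \<le> u x - w y - norm (x - y)^4/\<epsilon>" if "p \<in> KK" "q \<in> KK" for p q
    using z(2)[of "(p,q)"] that by (simp add: \<Phi>_def x_def y_def)
  define a where "a = x - y"
  have Mxy: "u x - w y \<ge> M + norm a^4/\<epsilon>"
    using hmax[of x0 x0] OK x0 by (auto simp: M_def a_def)
  have Mxy': "u x - w y \<ge> M" using Mxy \<epsilon>0 by (smt (verit) divide_nonneg_pos zero_le_power norm_ge_zero)
  have na: "norm a < \<delta>"
  proof -
    have "norm a^4/\<epsilon> \<le> 2*BK" using Mxy uK[OF xK] wK[OF yK] M0 by linarith
    hence "norm a^4 \<le> 2*BK*\<epsilon>" using \<epsilon>0 by (simp add: field_simps)
    also have "\<dots> < \<delta>^4" using \<delta>0 BK0 unfolding \<epsilon>_def by (simp add: field_simps)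
    finally show ?thesis using \<delta>0 by (metis power_less_imp_less_base less_le)
  qed
  have xO: "x \<in> \<Omega>"
  proof (rule ccontr)
    assume "x \<notin> \<Omega>"
    hence "u x \<le> w x" using assms(10) by blast
    moreover have "dist (w x) (w y) < M/2" using \<delta>w(2)[OF yK xK] na by (simp add: dist_norm a_def \<delta>_def)
    ultimately show False using Mxy' M0 by (simp add: dist_real_def abs_less_iff)
  qed
  have yO: "y \<in> \<Omega>"
  proof (rule ccontr)
    assume "y \<notin> \<Omega>"
    hence "u y \<le> w y" using assms(10) by blast
    moreover have "dist (u x) (u y) < M/2" using \<delta>u(2)[OF yK xK] na by (simp add: dist_norm a_def \<delta>_def)
    ultimately show False using Mxy' M0 by (simp add: dist_real_def abs_less_iff)
  qed
  have nx: "norm x < R1" and ny: "norm y < R1" using inO xO yO by auto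
  define K2 where "K2 = (12*norm a^2 + 2)/\<epsilon> + 2"
  have K20: "K2 > 0" using \<epsilon>0 by (simp add: K2_def add_nonneg_pos)
  define q where "q = 2 - 2 * s"
  have q: "0 < q" "q < 1" using assms(1,2) by (auto simp: q_def)
  define X where "X = c1 * d * q / (8 * K2)"
  have X0: "X > 0" using c1 d1 q K20 by (simp add: X_def)
  define r where "r = min (1/2) (X powr (1/q))"
  have r0: "r > 0" and rh: "r \<le> 1/2" using X0 by (auto simp: r_def)
  have rd: "r < d" using rh d1 by simp
  have I1: "K2 * (r powr (2 - 2 * s)/(2 - 2 * s)) < c1 * d / 4"
  proof -
    have "r powr q \<le> (X powr (1/q)) powr q" using r0 q by (intro powr_mono2) (auto simp: r_def)
    also have "\<dots> = X" using q X0 by (simp add: powr_powr)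
    finally have "r powr q \<le> X" .
    hence "K2 * (r powr q / q) \<le> K2 * (X / q)" using K20 q by (intro mult_left_mono divide_right_mono) auto
    also have "\<dots> = c1 * d / 8" using K20 q by (simp add: X_def field_simps)
    also have "\<dots> < c1 * d / 4" using c1 d1 by simp
    finally show ?thesis by (simp add: q_def)
  qed
  define p where "p = (4*norm a^2/\<epsilon>) *\<^sub>R a"
  define \<phi> where "\<phi> = (\<lambda>z. u x + Fq \<epsilon> a (z - x))"
  define \<psi> where "\<psi> = (\<lambda>z. w y - Fq \<epsilon> a (y - z))"
  define ut where "ut = (\<lambda>z. if z \<in> ball x r then \<phi> z else u z)"
  define wt where "wt = (\<lambda>z. if z \<in> ball y r then \<psi> z else w z)"
  have cphi: "continuous_on UNIV \<phi>" unfolding \<phi>_def Fq_def by (intro continuous_intros) (use \<epsilon>0 in auto)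
  have cpsi: "continuous_on UNIV \<psi>" unfolding \<psi>_def Fq_def by (intro continuous_intros) (use \<epsilon>0 in auto)
  have ballK: "z \<in> KK" if "norm z < R1 + r" for z
    using that rh T0 d1 by (auto simp: KK_def R_def)
  have phi_gt: "\<forall>z\<in>ball x r - {x}. \<phi> z > u z"
  proof
    fix z assume z: "z \<in> ball x r - {x}"
    have zK: "z \<in> KK" using z nx norm_triangle_ineq[of x "z - x"] by (intro ballK) (auto simp: dist_norm norm_minus_commute)
    have e: "z - y = a + (z - x)" by (simp add: a_def)
    have "u z - w y - norm (z - y)^4/\<epsilon> \<le> u x - w y - norm (x - y)^4/\<epsilon>" by (rule hmax[OF zK yK])
    hence "u z \<le> u x + (norm (a + (z - x))^4 - norm a^4)/\<epsilon>" unfolding e a_def[symmetric] by (simp add: diff_divide_distrib)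
    moreover have "norm (z - x)^4 > 0" using z by auto
    ultimately show "\<phi> z > u z" unfolding \<phi>_def Fq_def by linarith
  qed
  have psi_lt: "\<forall>z\<in>ball y r - {y}. \<psi> z < w z"
  proof
    fix z assume z: "z \<in> ball y r - {y}"
    have zK: "z \<in> KK" using z ny norm_triangle_ineq[of y "z - y"] by (intro ballK) (auto simp: dist_norm norm_minus_commute)
    have e: "x - z = a + (y - z)" by (simp add: a_def)
    have "u x - w z - norm (x - z)^4/\<epsilon> \<le> u x - w y - norm (x - y)^4/\<epsilon>" by (rule hmax[OF xK zK])
    hence "w y - (norm (a + (y - z))^4 - norm a^4)/\<epsilon> \<le> w z" unfolding e a_def[symmetric] by (simp add: diff_divide_distrib)
    moreover have "norm (y - z)^4 > 0" using z by auto
    ultimately show "\<psi> z < w z" unfolding \<psi>_def Fq_def by linarith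
  qed
  have C11p: "C11_with \<phi> x p" unfolding \<phi>_def p_def by (rule C11_phi[OF \<epsilon>0])
  have C11q: "C11_with \<psi> y p" unfolding \<psi>_def p_def by (rule C11_psi[OF \<epsilon>0])
  have Iu: "inf_frac_lap s ut x \<ge> 0"
  proof -
    have "visc_ge0 s u x" using assms(7) xO by blast
    moreover have "C11_at \<phi> x" using C11p by (auto simp: C11_at_def)
    moreover have "\<phi> x = u x" by (simp add: \<phi>_def)
    ultimately show ?thesis unfolding visc_ge0_def ut_def
      using r0 phi_gt continuous_on_subset[OF cphi] by blast
  qed
  have Iw: "inf_frac_lap s wt y \<le> 0"
  proof -
    have "visc_le0 s w y" using assms(8) yO by blast
    moreover have "C11_at \<psi> y" using C11q by (auto simp: C11_at_def)
    moreover have "\<psi> y = w y" by (simp add: \<psi>_def)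
    ultimately show ?thesis unfolding visc_le0_def wt_def
      using r0 psi_lt continuous_on_subset[OF cpsi] by blast
  qed
  have gru: "grad_at ut x = p" unfolding ut_def by (rule grad_at_eq[OF C11_tilde[OF C11p r0]])
  have grw: "grad_at wt y = p" unfolding wt_def by (rule grad_at_eq[OF C11_tilde[OF C11q r0]])
  have utx: "ut x = u x" using r0 by (simp add: ut_def \<phi>_def)
  have wty: "wt y = w y" using r0 by (simp add: wt_def \<psi>_def)
  have Lu: "ut (x + h) = u x + Fq \<epsilon> a h" if "norm h < r" for h using that by (simp add: ut_def \<phi>_def dist_norm)
  have Lw: "wt (y + h) = w y - Fq \<epsilon> a (-h)" if "norm h < r" for h using that by (simp add: wt_def \<psi>_def dist_norm)
  have Lu': "ut (x + h) = u (x + h)" if "norm h \<ge> r" for h using that by (simp add: ut_def dist_norm)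
  have Lw': "wt (y + h) = w (y + h)" if "norm h \<ge> r" for h using that by (simp add: wt_def dist_norm)
  define Bf where "Bf t = (if t\<in>{0<..<r} then K2 * t powr (1 - 2 * s) else 0) + (if t\<in>{d..2*d} then -c1 else 0)
            + (if t\<in>{T..} then c3 * t powr (a0 - 1 - 2 * s) else 0)" for t
  define IB where "IB = K2 * (r powr ((1 - 2 * s)+1)/((1 - 2 * s)+1)) + (-c1)*d + c3 * (-(T powr ((a0 - 1 - 2 * s)+1))/((a0 - 1 - 2 * s)+1))"
  have IBi: "(Bf has_integral IB) {0<..}"
    unfolding Bf_def IB_def using r0 rd d1 T a0 assms(1,2) R1 by (intro B_int) auto
  have IB0: "IB < 0"
  proof -
    have e1: "(1 - 2 * s) + 1 = 2 - 2 * s" by simp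
    have "IB = K2 * (r powr (2 - 2 * s)/(2 - 2 * s)) + (-c1)*d + I3" unfolding IB_def I3_def e1 ..
    moreover have "c1 * d > 0" using c1 d1 by simp
    ultimately show ?thesis using I1 I3 by linarith
  qed
  have tk: "t^2 / t powr k = t powr (1 - 2 * s)" if "t > 0" for t
  proof -
    have "t^2 / t powr k = t powr 2 / t powr k" using that by (simp add: powr_numeral)
    also have "\<dots> = t powr (2 - k)" by (metis powr_diff)
    finally show ?thesis by (simp add: k_def)
  qed
  have grow: "\<bar>f (z + h)\<bar> \<le> C * ((1+R1)/\<tau> + 1) powr a0 * t powr a0 \<and> \<bar>f z\<bar> \<le> C * ((1+R1)/\<tau> + 1) powr a0 * t powr a0"
    if "norm h = t" "0 < \<tau>" "\<tau> \<le> t" "norm z < R1" "\<And>q. \<bar>f q\<bar> \<le> C * (1 + norm q) powr a0" for f z h t \<tau>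
  proof -
    have "norm (z + h) \<le> R1 + t" using that norm_triangle_ineq[of z h] by linarith
    hence 1: "C * (1 + norm (z + h)) powr a0 \<le> C * ((1+R1)/\<tau> + 1) powr a0 * t powr a0"
      using that a0 R1 C0 by (intro growth_bd) auto
    have 2: "C * (1 + norm z) powr a0 \<le> C * ((1+R1)/\<tau> + 1) powr a0 * t powr a0"
      using that a0 R1 C0 by (intro growth_bd) auto
    show ?thesis using 1 2 that(5)[of "z+h"] that(5)[of z] by linarith
  qed
  have core: "((ut (x + t *\<^sub>R e) - ut x) - (wt (y + t *\<^sub>R e) - wt y)) / t powr k \<le> Bf t"
    if e: "norm e = 1" and t: "t > 0" for e t
  proof -
    define h where "h = t *\<^sub>R e"
    have nh: "norm h = t" using e t by (simp add: h_def)
    have tk0: "t powr k > 0" using t by simp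
    consider "t < r" | "r \<le> t" "t < T" | "T \<le> t" by linarith
    then show ?thesis
    proof cases
      case 1
      have G: "(ut (x + h) - ut x) - (wt (y + h) - wt y) = Fq \<epsilon> a h + Fq \<epsilon> a (-h)"
        using Lu[of h] Lw[of h] nh 1 utx wty by simp
      have "Fq \<epsilon> a h + Fq \<epsilon> a (-h) \<le> K2 * t^2"
        using Fq_sym'(2)[OF \<epsilon>0, of h a] nh 1 rh by (simp add: K2_def)
      hence "((ut (x + h) - ut x) - (wt (y + h) - wt y)) / t powr k \<le> K2 * t^2 / t powr k"
        unfolding G using tk0 by (intro divide_right_mono) auto
      also have "K2 * t^2 / t powr k = K2 * t powr (1 - 2 * s)"
        using tk[OF t] by (metis times_divide_eq_right)
      finally show ?thesis using 1 t rd T d1 R1 by (simp add: Bf_def h_def)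
    next
      case 2
      have xh: "x + h \<in> KK" and yh: "y + h \<in> KK"
        using nx ny nh 2 norm_triangle_ineq[of x h] norm_triangle_ineq[of y h]
        by (auto simp: KK_def R_def)
      have G: "(ut (x + h) - ut x) - (wt (y + h) - wt y) = (u (x + h) - w (y + h)) - (u x - w y)"
        using Lu'[of h] Lw'[of h] nh 2 utx wty by simp
      have "u (x + h) - w (y + h) - norm ((x + h) - (y + h))^4/\<epsilon> \<le> u x - w y - norm (x - y)^4/\<epsilon>"
        by (rule hmax[OF xh yh])
      hence G0: "(ut (x + h) - ut x) - (wt (y + h) - wt y) \<le> 0" unfolding G by simp
      show ?thesis
      proof (cases "d \<le> t \<and> t \<le> 2*d")
        case True
        have "norm (x + h) \<ge> t - norm x" using norm_triangle_ineq2[of h "-x"] nh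
          by (simp add: algebra_simps)
        hence "norm (x + h) \<ge> R1" using True nx by (simp add: d_def)
        hence "x + h \<notin> \<Omega>" using R1 by auto
        hence "u (x + h) \<le> w (x + h)" using assms(10) by blast
        moreover have "dist (w (x + h)) (w (y + h)) < M/2"
          using \<delta>w(2)[OF yh xh] na by (simp add: dist_norm a_def \<delta>_def)
        hence "w (x + h) - w (y + h) < M/2" unfolding dist_real_def by linarith
        ultimately have "(ut (x + h) - ut x) - (wt (y + h) - wt y) \<le> -(M/2)"
          unfolding G using Mxy' by linarith
        hence "((ut (x + h) - ut x) - (wt (y + h) - wt y)) / t powr k \<le> -(M/2) / t powr k"
          using tk0 by (intro divide_right_mono) auto
        also have "-(M/2) / t powr k \<le> -(M/2) / (2*d) powr k"
        proof -
          have "t powr k \<le> (2*d) powr k" using True t k_def assms(1) by (intro powr_mono2) auto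
          hence "(M/2) / (2*d) powr k \<le> (M/2) / t powr k" using M0 tk0 d1 by (intro divide_left_mono) (auto intro: mult_pos_pos)
          thus ?thesis by simp
        qed
        also have "\<dots> = -c1" by (simp add: c1_def)
        finally show ?thesis using True 2 rd by (simp add: Bf_def h_def)
      next
        case False
        have "((ut (x + h) - ut x) - (wt (y + h) - wt y)) / t powr k \<le> 0"
          using G0 tk0 by (simp add: divide_nonpos_pos)
        thus ?thesis using False 2 by (auto simp: Bf_def h_def)
      qed
    next
      case 3
      have rT: "r \<le> t" using 3 rd T(2) d1 R1 by linarith
      have G: "(ut (x + h) - ut x) - (wt (y + h) - wt y) = (u (x + h) - w (y + h)) - (u x - w y)"
        using Lu'[of h] Lw'[of h] nh rT utx wty by simp
      have gu1: "\<bar>u (x + h)\<bar> \<le> C * ((1+R1)/T + 1) powr a0 * t powr a0"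
        using grow[of h t T x u] nh T0 3 nx gu by blast
      have gw1: "\<bar>w (y + h)\<bar> \<le> C * ((1+R1)/T + 1) powr a0 * t powr a0"
        using grow[of h t T y w] nh T0 3 ny gw by blast
      have "(ut (x + h) - ut x) - (wt (y + h) - wt y) \<le> c3 * t powr a0"
        unfolding G c3_def using gu1 gw1 Mxy' M0 by (simp add: abs_le_iff)
      hence "((ut (x + h) - ut x) - (wt (y + h) - wt y)) / t powr k \<le> c3 * t powr a0 / t powr k"
        using tk0 by (intro divide_right_mono) auto
      also have "c3 * t powr a0 / t powr k = c3 * t powr (a0 - k)"
        by (metis powr_diff times_divide_eq_right)
      also have "\<dots> = c3 * t powr (a0 - 1 - 2 * s)" by (simp add: k_def algebra_simps)
      finally show ?thesis using 3 rd T(2) d1 R1 by (auto simp: Bf_def h_def)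
    qed
  qed
  have mu[measurable]: "u \<in> borel_measurable borel" by (rule borel_measurable_continuous_onI[OF assms(5)])
  have mw[measurable]: "w \<in> borel_measurable borel" by (rule borel_measurable_continuous_onI[OF assms(6)])
  have mphi[measurable]: "\<phi> \<in> borel_measurable borel" by (rule borel_measurable_continuous_onI[OF cphi])
  have mpsi[measurable]: "\<psi> \<in> borel_measurable borel" by (rule borel_measurable_continuous_onI[OF cpsi])
  have [measurable]: "ball x r \<in> sets borel" "ball y r \<in> sets borel" by auto
  have mut[measurable]: "ut \<in> borel_measurable borel" unfolding ut_def by measurable
  have mwt[measurable]: "wt \<in> borel_measurable borel" unfolding wt_def by measurable
  define \<Lambda> where "\<Lambda> = C * ((1+R1)/r + 1) powr a0"
  have \<Lambda>0: "\<Lambda> \<ge> 0" using C0 by (simp add: \<Lambda>_def)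
  define D where "D = K2 * (r powr (2 - 2 * s)/(2 - 2 * s)) + (4*\<Lambda>) * (-(r powr (a0 - 2 * s))/(a0 - 2 * s))"
  have growU: "\<bar>ut (x + h)\<bar> \<le> \<Lambda> * t powr a0 \<and> \<bar>ut x\<bar> \<le> \<Lambda> * t powr a0" if "norm h = t" "r \<le> t" for h t
    using grow[of h t r x u] that r0 nx gu Lu'[of h] utx by (simp add: \<Lambda>_def)
  have growW: "\<bar>wt (y + h)\<bar> \<le> \<Lambda> * t powr a0 \<and> \<bar>wt y\<bar> \<le> \<Lambda> * t powr a0" if "norm h = t" "r \<le> t" for h t
    using grow[of h t r y w] that r0 ny gw Lw'[of h] wty by (simp add: \<Lambda>_def)
  have Bfi: "Bf integrable_on {0<..}" using IBi by blast
  have intB: "integral {0<..} Bf = IB" using IBi by (rule integral_unique)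
  show False
  proof (cases "p = 0")
    case False
    define v where "v = p /\<^sub>R norm p"
    have nv: "norm v = 1" using False by (simp add: v_def)
    define fu where "fu t = (ut (x + t *\<^sub>R v) + ut (x - t *\<^sub>R v) - 2 * ut x) / t powr (1 + 2 * s)" for t
    define fw where "fw t = (wt (y + t *\<^sub>R v) + wt (y - t *\<^sub>R v) - 2 * wt y) / t powr (1 + 2 * s)" for t
    have eu: "inf_frac_lap s ut x = integral {0<..} fu"
      unfolding inf_frac_lap_def gru fu_def using False by (simp add: Let_def v_def)
    have ew: "inf_frac_lap s wt y = integral {0<..} fw"
      unfolding inf_frac_lap_def grw fw_def using False by (simp add: Let_def v_def)
    have fui: "fu integrable_on {0<..}" unfolding fu_def
    proof (rule dom_int(1)[OF assms(1,2) a0 r0 less_imp_le[OF K20] _ _ _ _, of "4*\<Lambda>"])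
      show "0 \<le> 4*\<Lambda>" using \<Lambda>0 by simp
      show "(\<lambda>t. ut (x + t *\<^sub>R v) + ut (x - t *\<^sub>R v) - 2 * ut x) \<in> borel_measurable borel" by measurable
    next
      fix t :: real assume t: "0 < t" "t < r"
      have "ut (x + t *\<^sub>R v) + ut (x - t *\<^sub>R v) - 2 * ut x = Fq \<epsilon> a (t *\<^sub>R v) + Fq \<epsilon> a (-(t *\<^sub>R v))"
        using Lu[of "t *\<^sub>R v"] Lu[of "-(t *\<^sub>R v)"] t nv utx by simp
      moreover have "0 \<le> Fq \<epsilon> a (t *\<^sub>R v) + Fq \<epsilon> a (-(t *\<^sub>R v))" "Fq \<epsilon> a (t *\<^sub>R v) + Fq \<epsilon> a (-(t *\<^sub>R v)) \<le> K2 * t^2"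
        using Fq_sym'[OF \<epsilon>0, of "t *\<^sub>R v" a] t nv rh by (auto simp: K2_def)
      ultimately show "\<bar>ut (x + t *\<^sub>R v) + ut (x - t *\<^sub>R v) - 2 * ut x\<bar> \<le> K2 * t^2" by simp
    next
      fix t :: real assume t: "r \<le> t"
      have "\<bar>ut (x + t *\<^sub>R v)\<bar> \<le> \<Lambda> * t powr a0 \<and> \<bar>ut x\<bar> \<le> \<Lambda> * t powr a0" using growU[of "t *\<^sub>R v" t] t r0 nv by simp
      moreover have "\<bar>ut (x + (-(t *\<^sub>R v)))\<bar> \<le> \<Lambda> * t powr a0" using growU[of "-(t *\<^sub>R v)" t] t r0 nv by simp
      ultimately show "\<bar>ut (x + t *\<^sub>R v) + ut (x - t *\<^sub>R v) - 2 * ut x\<bar> \<le> 4*\<Lambda> * t powr a0" unfolding abs_le_iff by auto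
    qed
    have fwi: "fw integrable_on {0<..}" unfolding fw_def
    proof (rule dom_int(1)[OF assms(1,2) a0 r0 less_imp_le[OF K20] _ _ _ _, of "4*\<Lambda>"])
      show "0 \<le> 4*\<Lambda>" using \<Lambda>0 by simp
      show "(\<lambda>t. wt (y + t *\<^sub>R v) + wt (y - t *\<^sub>R v) - 2 * wt y) \<in> borel_measurable borel" by measurable
    next
      fix t :: real assume t: "0 < t" "t < r"
      have "wt (y + t *\<^sub>R v) + wt (y - t *\<^sub>R v) - 2 * wt y = -(Fq \<epsilon> a (t *\<^sub>R v) + Fq \<epsilon> a (-(t *\<^sub>R v)))"
        using Lw[of "t *\<^sub>R v"] Lw[of "-(t *\<^sub>R v)"] t nv wty by simp
      moreover have "0 \<le> Fq \<epsilon> a (t *\<^sub>R v) + Fq \<epsilon> a (-(t *\<^sub>R v))" "Fq \<epsilon> a (t *\<^sub>R v) + Fq \<epsilon> a (-(t *\<^sub>R v)) \<le> K2 * t^2"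
        using Fq_sym'[OF \<epsilon>0, of "t *\<^sub>R v" a] t nv rh by (auto simp: K2_def)
      ultimately show "\<bar>wt (y + t *\<^sub>R v) + wt (y - t *\<^sub>R v) - 2 * wt y\<bar> \<le> K2 * t^2" by simp
    next
      fix t :: real assume t: "r \<le> t"
      have "\<bar>wt (y + t *\<^sub>R v)\<bar> \<le> \<Lambda> * t powr a0 \<and> \<bar>wt y\<bar> \<le> \<Lambda> * t powr a0" using growW[of "t *\<^sub>R v" t] t r0 nv by simp
      moreover have "\<bar>wt (y + (-(t *\<^sub>R v)))\<bar> \<le> \<Lambda> * t powr a0" using growW[of "-(t *\<^sub>R v)" t] t r0 nv by simp
      ultimately show "\<bar>wt (y + t *\<^sub>R v) + wt (y - t *\<^sub>R v) - 2 * wt y\<bar> \<le> 4*\<Lambda> * t powr a0" unfolding abs_le_iff by auto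
    qed
    have "integral {0<..} fu - integral {0<..} fw = integral {0<..} (\<lambda>t. fu t - fw t)"
      by (rule integral_diff[OF fui fwi, symmetric])
    also have "\<dots> \<le> integral {0<..} (\<lambda>t. 2 * Bf t)"
    proof (rule integral_le)
      show "(\<lambda>t. fu t - fw t) integrable_on {0<..}" using fui fwi by (rule integrable_diff)
      show "(\<lambda>t. 2 * Bf t) integrable_on {0<..}" using has_integral_mult_right[OF IBi, of 2] by blast
    next
      fix t :: real assume t: "t \<in> {0<..}"
      have nmv: "norm (-v) = 1" using nv by simp
      have "fu t - fw t = ((ut (x + t *\<^sub>R v) - ut x) - (wt (y + t *\<^sub>R v) - wt y)) / t powr k
           + ((ut (x + t *\<^sub>R (-v)) - ut x) - (wt (y + t *\<^sub>R (-v)) - wt y)) / t powr k"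
        unfolding fu_def fw_def k_def by (simp add: diff_divide_distrib[symmetric] add_divide_distrib[symmetric] algebra_simps)
      also have "\<dots> \<le> Bf t + Bf t" using core[OF nv] core[OF nmv] t by (intro add_mono) auto
      finally show "fu t - fw t \<le> 2 * Bf t" by simp
    qed
    also have "\<dots> = 2 * IB" using has_integral_mult_right[OF IBi, of 2] by (rule integral_unique)
    finally show False using Iu Iw eu ew IB0 by linarith
  next
    case True
    have a00: "a = 0" using True \<epsilon>0 by (auto simp: p_def)
    have Fsym: "Fq \<epsilon> a (-h) = Fq \<epsilon> a h" for h by (simp add: Fq_def a00)
    have Fb: "0 \<le> Fq \<epsilon> a h \<and> Fq \<epsilon> a h \<le> K2 * norm h^2" if "norm h \<le> 1" for h
      using Fq_sym'[OF \<epsilon>0 that, of a] unfolding Fsym K2_def[symmetric] by linarith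
    define Au where "Au e = integral {0<..} (\<lambda>t. (ut (x + t *\<^sub>R e) - ut x) / t powr (1 + 2 * s))" for e
    define Aw where "Aw e = integral {0<..} (\<lambda>t. (wt (y + t *\<^sub>R e) - wt y) / t powr (1 + 2 * s))" for e
    have eu: "inf_frac_lap s ut x = (SUP e\<in>sphere 0 1. Au e) + (INF e\<in>sphere 0 1. Au (-e))"
      unfolding inf_frac_lap_def gru True Au_def by simp
    have ew: "inf_frac_lap s wt y = (SUP e\<in>sphere 0 1. Aw e) + (INF e\<in>sphere 0 1. Aw (-e))"
      unfolding inf_frac_lap_def grw True Aw_def by simp
    have iu: "(\<lambda>t. (ut (x + t *\<^sub>R e) - ut x) / t powr (1 + 2 * s)) integrable_on {0<..} \<and> \<bar>Au e\<bar> \<le> D"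
      if ne: "norm e = 1" for e
    proof -
      have b1: "\<bar>ut (x + t *\<^sub>R e) - ut x\<bar> \<le> K2 * t^2" if "0 < t" "t < r" for t
        using Lu[of "t *\<^sub>R e"] Fb[of "t *\<^sub>R e"] that ne rh utx by simp
      have b2: "\<bar>ut (x + t *\<^sub>R e) - ut x\<bar> \<le> 4*\<Lambda> * t powr a0" if "r \<le> t" for t
      proof -
        have "\<bar>ut (x + t *\<^sub>R e)\<bar> \<le> \<Lambda> * t powr a0 \<and> \<bar>ut x\<bar> \<le> \<Lambda> * t powr a0" using growU[of "t *\<^sub>R e" t] that r0 ne by simp
        moreover have "0 \<le> \<Lambda> * t powr a0" using \<Lambda>0 by simp
        ultimately show ?thesis unfolding abs_le_iff by auto
      qed
      have m: "(\<lambda>t. ut (x + t *\<^sub>R e) - ut x) \<in> borel_measurable borel" by measurable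
      have "0 \<le> 4*\<Lambda>" using \<Lambda>0 by simp
      from dom_int[OF assms(1,2) a0 r0 less_imp_le[OF K20] this m b1 b2] show ?thesis
        by (simp add: Au_def D_def)
    qed
    have iw: "(\<lambda>t. (wt (y + t *\<^sub>R e) - wt y) / t powr (1 + 2 * s)) integrable_on {0<..} \<and> \<bar>Aw e\<bar> \<le> D"
      if ne: "norm e = 1" for e
    proof -
      have b1: "\<bar>wt (y + t *\<^sub>R e) - wt y\<bar> \<le> K2 * t^2" if "0 < t" "t < r" for t
        using Lw[of "t *\<^sub>R e"] Fb[of "-(t *\<^sub>R e)"] that ne rh wty by simp
      have b2: "\<bar>wt (y + t *\<^sub>R e) - wt y\<bar> \<le> 4*\<Lambda> * t powr a0" if "r \<le> t" for t
      proof -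
        have "\<bar>wt (y + t *\<^sub>R e)\<bar> \<le> \<Lambda> * t powr a0 \<and> \<bar>wt y\<bar> \<le> \<Lambda> * t powr a0" using growW[of "t *\<^sub>R e" t] that r0 ne by simp
        moreover have "0 \<le> \<Lambda> * t powr a0" using \<Lambda>0 by simp
        ultimately show ?thesis unfolding abs_le_iff by auto
      qed
      have m: "(\<lambda>t. wt (y + t *\<^sub>R e) - wt y) \<in> borel_measurable borel" by measurable
      have "0 \<le> 4*\<Lambda>" using \<Lambda>0 by simp
      from dom_int[OF assms(1,2) a0 r0 less_imp_le[OF K20] this m b1 b2] show ?thesis
        by (simp add: Aw_def D_def)
    qed
    have cmp: "Au e \<le> Aw e + IB" if ne: "norm e = 1" for e
    proof -
      have "Au e - Aw e = integral {0<..} (\<lambda>t. (ut (x + t *\<^sub>R e) - ut x) / t powr (1 + 2 * s) - (wt (y + t *\<^sub>R e) - wt y) / t powr (1 + 2 * s))"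
        unfolding Au_def Aw_def using iu[OF ne] iw[OF ne] by (intro integral_diff[symmetric]) auto
      also have "\<dots> \<le> integral {0<..} Bf"
      proof (rule integral_le)
        show "(\<lambda>t. (ut (x + t *\<^sub>R e) - ut x) / t powr (1 + 2 * s) - (wt (y + t *\<^sub>R e) - wt y) / t powr (1 + 2 * s)) integrable_on {0<..}"
          using iu[OF ne] iw[OF ne] by (intro integrable_diff) auto
        show "Bf integrable_on {0<..}" by (rule Bfi)
      next
        fix t :: real assume t: "t \<in> {0<..}"
        have "(ut (x + t *\<^sub>R e) - ut x) / t powr (1 + 2 * s) - (wt (y + t *\<^sub>R e) - wt y) / t powr (1 + 2 * s)
          = ((ut (x + t *\<^sub>R e) - ut x) - (wt (y + t *\<^sub>R e) - wt y)) / t powr k"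
          by (simp add: k_def diff_divide_distrib)
        also have "\<dots> \<le> Bf t" using core[OF ne] t by auto
        finally show "(ut (x + t *\<^sub>R e) - ut x) / t powr (1 + 2 * s) - (wt (y + t *\<^sub>R e) - wt y) / t powr (1 + 2 * s) \<le> Bf t" .
      qed
      finally show ?thesis using intB by simp
    qed
    obtain e0 :: "real^'n" where "norm e0 = 1" using vector_choose_size[of 1] by auto
    hence Sne: "sphere (0::real^'n) 1 \<noteq> {}" by auto
    have "inf_frac_lap s ut x \<le> inf_frac_lap s wt y + 2 * IB"
      unfolding eu ew
    proof (rule sup_inf_compare[OF Sne])
      fix e :: "real^'n" assume "e \<in> sphere 0 1"
      hence ne: "norm e = 1" and nme: "norm (-e) = 1" by auto
      show "\<bar>Au e\<bar> \<le> D \<and> \<bar>Aw e\<bar> \<le> D \<and> \<bar>Au (-e)\<bar> \<le> D \<and> \<bar>Aw (-e)\<bar> \<le> D"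
        using iu[OF ne] iw[OF ne] iu[OF nme] iw[OF nme] by auto
      show "Au e \<le> Aw e + IB \<and> Au (-e) \<le> Aw (-e) + IB" using cmp[OF ne] cmp[OF nme] by auto
    qed
    thus False using Iu Iw IB0 by linarith
  qed
qed

end
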